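(* Let $n\ge4$, let $\textnormal{Reg}(\mathcal{OCT}_n)$ be the set of regular elements of $\mathcal{OCT}_n$ and $L(n,n-1)=\{\alpha\in\textnormal{Reg}(\mathcal{OCT}_n):|\textnormal{Im}\,\alpha|\le n-1\}$. Then the rank of the semigroup $L(n,n-1)$ is $2$.
   Context: $\mathcal{T}_n$ is the full transformation semigroup on $[n]=\{1,\dots,n\}$ under composition. $\alpha$ is a contraction if $|x\alpha-y\alpha|\le|x-y|$ for all $x,y$, order-preserving if $x\le y\Rightarrow x\alpha\le y\alpha$. $\mathcal{OCT}_n$ is the semigroup of order-preserving contractions; $\alpha\in\mathcal{OCT}_n$ is regular if $\alpha\beta\alpha=\alpha$ for some $\beta\in\mathcal{OCT}_n$. The rank of a semigroup is the minimum cardinality of a generating set. *)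

theory Defs
  imports Main
begin

text \<open>Full transformations of [n] = {1..n}, represented as functions nat => nat
  that map {1..n} into itself and are the identity outside {1..n} (so that each
  transformation has a unique representative).\<close>
definition Tn :: "nat \<Rightarrow> (nat \<Rightarrow> nat) set" where
  "Tn n = {f. f ` {1..n} \<subseteq> {1..n} \<and> (\<forall>x. x \<notin> {1..n} \<longrightarrow> f x = x)}"

text \<open>Semigroup product with maps written on the right: x(ab) = (xa)b.\<close>
definition tmult :: "(nat \<Rightarrow> nat) \<Rightarrow> (nat \<Rightarrow> nat) \<Rightarrow> (nat \<Rightarrow> nat)" where
  "tmult a b = b \<circ> a"

definition order_preserving :: "nat \<Rightarrow> (nat \<Rightarrow> nat) \<Rightarrow> bool" where
  "order_preserving n f \<longleftrightarrow> (\<forall>x\<in>{1..n}. \<forall>y\<in>{1..n}. x \<le> y \<longrightarrow> f x \<le> f y)"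

definition contraction :: "nat \<Rightarrow> (nat \<Rightarrow> nat) \<Rightarrow> bool" where
  "contraction n f \<longleftrightarrow> (\<forall>x\<in>{1..n}. \<forall>y\<in>{1..n}.
      \<bar>int (f x) - int (f y)\<bar> \<le> \<bar>int x - int y\<bar>)"

definition OCT :: "nat \<Rightarrow> (nat \<Rightarrow> nat) set" where
  "OCT n = {f \<in> Tn n. order_preserving n f \<and> contraction n f}"

definition RegOCT :: "nat \<Rightarrow> (nat \<Rightarrow> nat) set" where
  "RegOCT n = {a \<in> OCT n. \<exists>b \<in> OCT n. tmult (tmult a b) a = a}"

definition Lnn1 :: "nat \<Rightarrow> (nat \<Rightarrow> nat) set" where
  "Lnn1 n = {a \<in> RegOCT n. card (a ` {1..n}) \<le> n - 1}"

inductive_set sgen :: "(nat \<Rightarrow> nat) set \<Rightarrow> (nat \<Rightarrow> nat) set" for A where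
  base: "a \<in> A \<Longrightarrow> a \<in> sgen A"
| mult: "a \<in> sgen A \<Longrightarrow> b \<in> sgen A \<Longrightarrow> tmult a b \<in> sgen A"

definition srank :: "(nat \<Rightarrow> nat) set \<Rightarrow> nat" where
  "srank S = (LEAST k. \<exists>A. A \<subseteq> S \<and> finite A \<and> card A = k \<and> sgen A = S)"

end

theory Submission imports Defs begin
definition F :: "nat \<Rightarrow> nat \<Rightarrow> nat \<Rightarrow> nat \<Rightarrow> nat \<Rightarrow> nat" where
  "F n p k c x = (if 1 \<le> x \<and> x \<le> n then c + min (x - p) k else x)"
definition valid :: "nat \<Rightarrow> nat \<Rightarrow> nat \<Rightarrow> nat \<Rightarrow> bool" where
  "valid n p k c \<longleftrightarrow> 1 \<le> p \<and> p + k \<le> n \<and> 1 \<le> c \<and> c + k \<le> n"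
definition Fset :: "nat \<Rightarrow> (nat \<Rightarrow> nat) set" where
  "Fset n = {F n p k c | p k c. valid n p k c \<and> k + 2 \<le> n}"

lemma F_out: "\<not> (1 \<le> x \<and> x \<le> n) \<Longrightarrow> F n p k c x = x"
  unfolding F_def by auto

lemma F_in: "valid n p k c \<Longrightarrow> 1 \<le> x \<Longrightarrow> x \<le> n \<Longrightarrow> c \<le> F n p k c x \<and> F n p k c x \<le> c + k"
  unfolding valid_def F_def by auto

lemma F_image: assumes "valid n p k c" shows "F n p k c ` {1..n} = {c..c+k}"
proof
  show "F n p k c ` {1..n} \<subseteq> {c..c+k}" using F_in[OF assms] by auto
  show "{c..c+k} \<subseteq> F n p k c ` {1..n}"
  proof
    fix y assume y: "y \<in> {c..c+k}"
    have "F n p k c (y - c + p) = y" "y - c + p \<in> {1..n}"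
      using y assms unfolding valid_def F_def by auto
    then show "y \<in> F n p k c ` {1..n}" by (metis image_eqI)
  qed
qed

lemma F_card: assumes "valid n p k c" shows "card (F n p k c ` {1..n}) = k + 1"
proof -
  have "F n p k c ` {1..n} = {c..c+k}" by (rule F_image[OF assms])
  then show ?thesis by simp
qed

lemma F_Tn: "valid n p k c \<Longrightarrow> F n p k c \<in> Tn n"
  unfolding Tn_def using F_in by (fastforce simp: valid_def F_def)

lemma F_op: "order_preserving n (F n p k c)"
  unfolding order_preserving_def F_def by (auto simp: min_def)

lemma F_contr: "contraction n (F n p k c)"
  unfolding contraction_def F_def by (auto simp: min_def)

lemma F_OCT: "valid n p k c \<Longrightarrow> F n p k c \<in> OCT n"
  unfolding OCT_def using F_Tn F_op F_contr by blast

lemma F_reg: assumes "valid n p k c"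
  shows "tmult (tmult (F n p k c) (F n c k p)) (F n p k c) = F n p k c"
proof -
  have "F n p k c (F n c k p (F n p k c x)) = F n p k c x" for x
  proof (cases "1 \<le> x \<and> x \<le> n")
    case True
    then have a: "F n p k c x = c + min (x - p) k" by (simp add: F_def)
    have b: "F n c k p (c + min (x - p) k) = p + min (x - p) k"
      using assms unfolding F_def valid_def by auto
    have c1: "F n p k c (p + min (x - p) k) = c + min (x - p) k"
      using assms by (auto simp: F_def valid_def)
    show ?thesis unfolding a b c1 by simp
  next
    case False
    then show ?thesis by (simp only: F_out[OF False])
  qed
  then show ?thesis by (simp add: tmult_def fun_eq_iff)
qed

lemma valid_swap: "valid n p k c \<Longrightarrow> valid n c k p" by (auto simp: valid_def)

lemma Fset_Lnn1: "Fset n \<subseteq> Lnn1 n"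
proof
  fix f assume "f \<in> Fset n"
  then obtain p k c where v: "valid n p k c" "k + 2 \<le> n" and f: "f = F n p k c"
    unfolding Fset_def by auto
  have "f \<in> RegOCT n" unfolding RegOCT_def f
    using F_OCT[OF v(1)] F_OCT[OF valid_swap[OF v(1)]] F_reg[OF v(1)] by blast
  moreover have "card (f ` {1..n}) \<le> n - 1" using F_card[OF v(1)] v(2) f by simp
  ultimately show "f \<in> Lnn1 n" by (simp add: Lnn1_def)
qed

lemma comp_F:
  assumes "valid n p k c" "valid n p' k' c'"
  shows "\<exists>P K C. valid n P K C \<and> K \<le> k \<and> tmult (F n p k c) (F n p' k' c') = F n P K C"
proof -
  have inner: "F n p' k' c' (F n p k c x) = c' + min (c + min (x - p) k - p') k'"
    if "1 \<le> x" "x \<le> n" for x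
    using that F_in[OF assms(1) that] assms unfolding valid_def F_def by auto
  have eq: "tmult (F n p k c) (F n p' k' c') = F n P K C"
    if "\<And>x. 1 \<le> x \<Longrightarrow> x \<le> n \<Longrightarrow> c' + min (c + min (x - p) k - p') k' = C + min (x - P) K" for P K C
    unfolding tmult_def fun_eq_iff
  proof
    fix x show "(F n p' k' c' \<circ> F n p k c) x = F n P K C x"
    proof (cases "1 \<le> x \<and> x \<le> n")
      case True then show ?thesis using that inner by (simp add: F_def)
    next
      case False then show ?thesis by (simp only: F_out[OF False] comp_def)
    qed
  qed
  show ?thesis
  proof (cases "c + k \<le> p'")
    case True
    have "valid n 1 0 c'" using assms by (auto simp: valid_def)
    moreover have "tmult (F n p k c) (F n p' k' c') = F n 1 0 c'"
      by (rule eq) (use True in auto)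
    ultimately show ?thesis by blast
  next
    case F1: False
    show ?thesis
    proof (cases "p' + k' \<le> c")
      case True
      have "valid n 1 0 (c' + k')" using assms by (auto simp: valid_def)
      moreover have "tmult (F n p k c) (F n p' k' c') = F n 1 0 (c' + k')"
        by (rule eq) (use True in auto)
      ultimately show ?thesis by blast
    next
      case F2: False
      show ?thesis
      proof (cases "p' \<le> c")
        case True
        define e where "e = c - p'"
        have "valid n p (min k (k' - e)) (c' + e)" using assms F2 True by (auto simp: valid_def e_def)
        moreover have "tmult (F n p k c) (F n p' k' c') = F n p (min k (k' - e)) (c' + e)"
          by (rule eq) (use True F2 in \<open>auto simp: e_def min_def\<close>)
        ultimately show ?thesis by force
      next
        case False
        define e where "e = p' - c"
        have "valid n (p + e) (min (k - e) k') c'" using assms F1 False by (auto simp: valid_def e_def)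
        moreover have "tmult (F n p k c) (F n p' k' c') = F n (p + e) (min (k - e) k') c'"
          by (rule eq) (use False F1 in \<open>auto simp: e_def min_def\<close>)
        ultimately show ?thesis by force
      qed
    qed
  qed
qed

lemma dIVT:
  fixes f :: "nat \<Rightarrow> nat"
  assumes "\<And>x. a \<le> x \<Longrightarrow> x < b \<Longrightarrow> f (Suc x) \<le> f x + 1" "a \<le> b" "f a \<le> v" "v \<le> f b"
  shows "\<exists>w. a \<le> w \<and> w \<le> b \<and> f w = v"
  using assms
proof (induction b)
  case 0 then show ?case by auto
next
  case (Suc b)
  show ?case
  proof (cases "a \<le> b \<and> v \<le> f b")
    case True
    then have "\<exists>w. a \<le> w \<and> w \<le> b \<and> f w = v" using Suc by auto
    then show ?thesis by auto
  next
    case False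
    show ?thesis
    proof (cases "a \<le> b")
      case True
      then have "f b < v" using False by auto
      moreover have "f (Suc b) \<le> f b + 1" using Suc.prems(1) True by auto
      ultimately have "f (Suc b) = v" using Suc.prems(4) by auto
      then show ?thesis using Suc.prems(2) by auto
    next
      case F2: False
      then have "a = Suc b" using Suc.prems(2) by auto
      then show ?thesis using Suc.prems(3,4) by auto
    qed
  qed
qed

lemma reg_form:
  assumes "a \<in> RegOCT n" "n \<ge> 1"
  shows "\<exists>p k c. valid n p k c \<and> a = F n p k c"
proof -
  from assms obtain b where aO: "a \<in> OCT n" and bO: "b \<in> OCT n" and ab: "tmult (tmult a b) a = a"
    unfolding RegOCT_def by auto
  have aT: "a \<in> Tn n" and aop: "order_preserving n a" and ac: "contraction n a"
    using aO by (auto simp: OCT_def)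
  have bT: "b \<in> Tn n" and bop: "order_preserving n b" and bc: "contraction n b"
    using bO by (auto simp: OCT_def)
  have ran: "\<And>x. 1 \<le> x \<Longrightarrow> x \<le> n \<Longrightarrow> 1 \<le> a x \<and> a x \<le> n" using aT unfolding Tn_def image_subset_iff by auto
  have out: "\<And>x. \<not> (1 \<le> x \<and> x \<le> n) \<Longrightarrow> a x = x" using aT by (auto simp: Tn_def)
  have bran: "\<And>x. 1 \<le> x \<Longrightarrow> x \<le> n \<Longrightarrow> 1 \<le> b x \<and> b x \<le> n" using bT unfolding Tn_def image_subset_iff by auto
  have aba: "\<And>x. a (b (a x)) = a x" using ab by (metis comp_apply tmult_def)
  have mono: "\<And>x y. 1 \<le> x \<Longrightarrow> y \<le> n \<Longrightarrow> x \<le> y \<Longrightarrow> a x \<le> a y"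
    using aop by (auto simp: order_preserving_def)
  have bmono: "\<And>x y. 1 \<le> x \<Longrightarrow> y \<le> n \<Longrightarrow> x \<le> y \<Longrightarrow> b x \<le> b y"
    using bop by (auto simp: order_preserving_def)
  have step: "\<And>x. 1 \<le> x \<Longrightarrow> x < n \<Longrightarrow> a (Suc x) \<le> a x + 1"
  proof -
    fix x assume "1 \<le> x" "x < n"
    then have h: "Suc x \<in> {1..n}" "x \<in> {1..n}" by auto
    have "\<bar>int (a (Suc x)) - int (a x)\<bar> \<le> \<bar>int (Suc x) - int x\<bar>"
      using ac h unfolding contraction_def by blast
    then show "a (Suc x) \<le> a x + 1" by auto
  qed
  have bstep: "\<And>x. 1 \<le> x \<Longrightarrow> x < n \<Longrightarrow> b (Suc x) \<le> b x + 1"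
  proof -
    fix x assume "1 \<le> x" "x < n"
    then have h: "Suc x \<in> {1..n}" "x \<in> {1..n}" by auto
    have "\<bar>int (b (Suc x)) - int (b x)\<bar> \<le> \<bar>int (Suc x) - int x\<bar>"
      using bc h unfolding contraction_def by blast
    then show "b (Suc x) \<le> b x + 1" by auto
  qed
  define c where "c = a 1"
  have c1: "1 \<le> c" "c \<le> n" using ran[of 1] assms(2) by (auto simp: c_def)
  show ?thesis
  proof (cases "a n = c")
    case True
    have const: "a x = c" if "1 \<le> x" "x \<le> n" for x
      using mono[of 1 x] mono[of x n] that True by (auto simp: c_def)
    have "valid n 1 0 c" using c1 assms(2) by (auto simp: valid_def)
    moreover have "a = F n 1 0 c"
    proof
      fix x show "a x = F n 1 0 c x"
        by (cases "1 \<le> x \<and> x \<le> n") (auto simp: F_def const out)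
    qed
    ultimately show ?thesis by blast
  next
    case False
    then have cn: "c < a n" using mono[of 1 n] assms(2) by (auto simp: c_def)
    define PP where "PP = {x \<in> {1..n}. a x = c}"
    define QQ where "QQ = {x \<in> {1..n}. a x = a n}"
    define p where "p = Max PP"
    define q where "q = Min QQ"
    have fP: "finite PP" "PP \<noteq> {}" using assms(2) by (auto simp: PP_def c_def)
    have fQ: "finite QQ" "QQ \<noteq> {}" using assms(2) by (auto simp: QQ_def)
    have pP: "p \<in> PP" using Max_in[OF fP] p_def by simp
    have qQ: "q \<in> QQ" using Min_in[OF fQ] q_def by simp
    have pmax: "\<And>x. x \<in> PP \<Longrightarrow> x \<le> p" using Max_ge[OF fP(1)] p_def by simp
    have qmin: "\<And>x. x \<in> QQ \<Longrightarrow> q \<le> x" using Min_le[OF fQ(1)] q_def by simp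
    have p1: "1 \<le> p" "p \<le> n" "a p = c" using pP by (auto simp: PP_def)
    have q1: "1 \<le> q" "q \<le> n" "a q = a n" using qQ by (auto simp: QQ_def)
    have pq: "p < q"
    proof (rule ccontr)
      assume "\<not> p < q"
      then have "a q \<le> a p" using mono[of q p] p1 q1 by auto
      then show False using p1 q1 cn by auto
    qed
    have below: "a x = c" if "1 \<le> x" "x \<le> p" for x
      using mono[of 1 x] mono[of x p] that p1 by (auto simp: c_def)
    have above: "a x = a n" if "q \<le> x" "x \<le> n" for x
      using mono[of q x] mono[of x n] that q1 by auto
    have gtp: "c < a x" if "p < x" "x \<le> n" for x
    proof -
      have "c \<le> a x" using mono[of 1 x] that p1 by (auto simp: c_def)
      moreover have "a x \<noteq> c" using pmax[of x] that p1 by (auto simp: PP_def)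
      ultimately show ?thesis by auto
    qed
    have ltq: "a x < a n" if "1 \<le> x" "x < q" for x
    proof -
      have "a x \<le> a n" using mono[of x n] that q1 by auto
      moreover have "a x \<noteq> a n" using qmin[of x] that q1 by (auto simp: QQ_def)
      ultimately show ?thesis by auto
    qed
    have key: "p + k \<le> q \<Longrightarrow> a (p + k) = c + k" for k
    proof (induction k rule: less_induct)
      case (less k)
      show ?case
      proof (cases k)
        case 0 then show ?thesis using p1 by simp
      next
        case (Suc j)
        define x where "x = p + j"
        define u where "u = c + j"
        have ax: "a x = u" using less.IH[of j] less.prems Suc by (simp add: x_def u_def)
        have xr: "1 \<le> x" "Suc x \<le> q" "Suc x \<le> n" using p1 less.prems Suc q1 by (auto simp: x_def)
        have up: "a (Suc x) \<le> u + 1" using step[of x] xr ax by auto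
        have lo: "u \<le> a (Suc x)" using mono[of x "Suc x"] xr ax by auto
        have "a (Suc x) \<noteq> u"
        proof
          assume flat: "a (Suc x) = u"
          show False
          proof (cases j)
            case 0
            then show False using gtp[of "Suc x"] flat xr by (auto simp: x_def u_def)
          next
            case (Suc i)
            have axm: "a (x - 1) = u - 1" using less.IH[of i] less.prems Suc \<open>k = Suc j\<close>
              by (auto simp: x_def u_def)
            have xm: "1 \<le> x - 1" using p1 Suc by (auto simp: x_def)
            have "u < a q" using ltq[of x] xr ax q1 by auto
            then obtain w where w: "Suc x \<le> w" "w \<le> q" "a w = u + 1"
              using dIVT[of "Suc x" q a "u + 1"] step xr flat q1 by force
            have w1: "1 \<le> w" "w \<le> n" using w xr q1 by auto
            define s where "s = b (u - 1)"
            define t where "t = b u"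
            define r where "r = b (u + 1)"
            have as: "a s = u - 1" using aba[of "x - 1"] axm by (simp add: s_def)
            have at: "a t = u" using aba[of x] ax by (simp add: t_def)
            have ar: "a r = u + 1" using aba[of w] w by (simp add: r_def)
            have u1: "2 \<le> u" using c1 Suc by (auto simp: u_def)
            have un: "u + 1 \<le> n" using ran[OF w1] w by simp
            have sr: "1 \<le> s" "s \<le> n" "1 \<le> t" "t \<le> n" "1 \<le> r" "r \<le> n"
              using bran[of "u - 1"] bran[of u] bran[of "u+1"] u1 un
              by (auto simp: s_def t_def r_def)
            have st: "s \<le> t" using bmono[of "u - 1" u] u1 un by (simp add: s_def t_def)
            have tr: "t \<le> r" using bmono[of u "u + 1"] u1 un by (simp add: r_def t_def)
            have st1: "t \<le> s + 1" using bstep[of "u - 1"] u1 un by (simp add: s_def t_def)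
            have tr1: "r \<le> t + 1" using bstep[of u] u1 un by (simp add: r_def t_def)
            have "s \<noteq> t" using as at u1 by auto
            then have ts: "t = Suc s" using st st1 by auto
            have "t \<noteq> r" using at ar by auto
            then have rt: "r = Suc t" using tr tr1 by auto
            have "t \<le> x"
            proof (rule ccontr)
              assume "\<not> t \<le> x"
              then have "a x \<le> a s" using mono[of x s] xr ts sr by auto
              then show False using ax as u1 by auto
            qed
            then have "a r \<le> a (Suc x)" using mono[of r "Suc x"] rt sr xr by auto
            then show False using ar flat by auto
          qed
        qed
        then have "a (Suc x) = u + 1" using up lo by auto
        then show ?thesis using Suc by (simp add: x_def u_def)
      qed
    qed
    have aq: "a q = c + (q - p)" using key[of "q - p"] pq by simp
    have "valid n p (q - p) c" using p1 q1 c1 pq aq ran[of q] by (auto simp: valid_def)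
    moreover have "a = F n p (q - p) c"
    proof
      fix x show "a x = F n p (q - p) c x"
      proof (cases "1 \<le> x \<and> x \<le> n")
        case False then show ?thesis by (simp add: out F_out)
      next
        case True
        show ?thesis
        proof (cases "x \<le> p")
          case True then show ?thesis using below[of x] \<open>1 \<le> x \<and> x \<le> n\<close> by (simp add: F_def)
        next
          case F1: False
          show ?thesis
          proof (cases "x \<le> q")
            case True then show ?thesis using key[of "x - p"] F1 \<open>1 \<le> x \<and> x \<le> n\<close>
              by (auto simp: F_def min_def)
          next
            case False then show ?thesis using above[of x] aq q1 \<open>1 \<le> x \<and> x \<le> n\<close>
              by (simp add: F_def min_def)
          qed
        qed
      qed
    qed
    ultimately show ?thesis by blast
  qed
qed

lemma Lnn1_eq: assumes "n \<ge> 1" shows "Lnn1 n = Fset n"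
proof
  show "Fset n \<subseteq> Lnn1 n" by (rule Fset_Lnn1)
  show "Lnn1 n \<subseteq> Fset n"
  proof
    fix f assume f: "f \<in> Lnn1 n"
    then have "f \<in> RegOCT n" by (simp add: Lnn1_def)
    then obtain p k c where v: "valid n p k c" and fe: "f = F n p k c"
      using reg_form[OF _ assms] by blast
    have "k + 1 \<le> n - 1" using f F_card[OF v] fe by (simp add: Lnn1_def)
    then have "k + 2 \<le> n" by auto
    then show "f \<in> Fset n" using v fe by (auto simp: Fset_def)
  qed
qed

lemma F_r: "1 \<le> x \<Longrightarrow> x \<le> n \<Longrightarrow> F n p k c x = c + min (x - p) k"
  by (simp add: F_def)

definition g1 :: "nat \<Rightarrow> nat \<Rightarrow> nat" where "g1 n = F n 2 (n - 2) 1"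
definition g4 :: "nat \<Rightarrow> nat \<Rightarrow> nat" where "g4 n = F n 1 (n - 2) 2"

lemma ext_in:
  assumes "\<And>x. 1 \<le> x \<Longrightarrow> x \<le> n \<Longrightarrow> f x = g x" "\<And>x. \<not> (1 \<le> x \<and> x \<le> n) \<Longrightarrow> f x = x"
    "\<And>x. \<not> (1 \<le> x \<and> x \<le> n) \<Longrightarrow> g x = x"
  shows "f = g"
proof
  fix x show "f x = g x" using assms by (cases "1 \<le> x \<and> x \<le> n") auto
qed

lemma up:
  assumes "valid n p k c" "c + k + 1 \<le> n"
  shows "F n p k (Suc c) = tmult (F n p k c) (g4 n)"
proof (rule ext_in[where n=n])
  fix x assume x: "1 \<le> x" "x \<le> n"
  have i: "F n p k c x = c + min (x - p) k" by (rule F_r[OF x])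
  have "1 \<le> c + min (x - p) k" "c + min (x - p) k \<le> n" using assms by (auto simp: valid_def)
  then have "g4 n (c + min (x - p) k) = Suc (c + min (x - p) k)"
    unfolding g4_def using assms by (subst F_r) auto
  then show "F n p k (Suc c) x = tmult (F n p k c) (g4 n) x"
    by (simp add: tmult_def i F_r[OF x])
qed (auto simp: F_out tmult_def g4_def)

lemma down:
  assumes "valid n p k (Suc c)" "1 \<le> c"
  shows "F n p k c = tmult (F n p k (Suc c)) (g1 n)"
proof (rule ext_in[where n=n])
  fix x assume x: "1 \<le> x" "x \<le> n"
  have i: "F n p k (Suc c) x = Suc c + min (x - p) k" by (rule F_r[OF x])
  have "1 \<le> Suc c + min (x - p) k" "Suc c + min (x - p) k \<le> n" using assms by (auto simp: valid_def)
  then have "g1 n (Suc c + min (x - p) k) = c + min (x - p) k"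
    unfolding g1_def using assms by (subst F_r) (auto simp: valid_def)
  then show "F n p k c x = tmult (F n p k (Suc c)) (g1 n) x"
    by (simp add: tmult_def i F_r[OF x])
qed (auto simp: F_out tmult_def g1_def)

lemma e3: assumes "n \<ge> 4" shows "F n 1 (n - 2) 1 = tmult (g4 n) (g1 n)"
proof (rule ext_in[where n=n])
  fix x assume x: "1 \<le> x" "x \<le> n"
  have i: "g4 n x = 2 + min (x - 1) (n - 2)" unfolding g4_def by (rule F_r[OF x])
  have "g1 n (2 + min (x - 1) (n - 2)) = 1 + min (x - 1) (n - 2)"
    unfolding g1_def using assms by (subst F_r) auto
  then show "F n 1 (n - 2) 1 x = tmult (g4 n) (g1 n) x"
    by (simp add: tmult_def i F_r[OF x])
qed (auto simp: F_out tmult_def g1_def g4_def)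

lemma e2: assumes "n \<ge> 4" shows "F n 2 (n - 2) 2 = tmult (g1 n) (g4 n)"
proof (rule ext_in[where n=n])
  fix x assume x: "1 \<le> x" "x \<le> n"
  have i: "g1 n x = 1 + min (x - 2) (n - 2)" unfolding g1_def by (rule F_r[OF x])
  have "g4 n (1 + min (x - 2) (n - 2)) = 2 + min (x - 2) (n - 2)"
    unfolding g4_def using assms by (subst F_r) auto
  then show "F n 2 (n - 2) 2 x = tmult (g1 n) (g4 n) x"
    by (simp add: tmult_def i F_r[OF x])
qed (auto simp: F_out tmult_def g1_def g4_def)

lemma Ustep: assumes "n \<ge> 4" "k + 1 \<le> n - 2"
  shows "F n 1 k 1 = tmult (tmult (g4 n) (F n 1 (Suc k) 1)) (g1 n)"
proof (rule ext_in[where n=n])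
  fix x assume x: "1 \<le> x" "x \<le> n"
  have i: "g4 n x = 2 + min (x - 1) (n - 2)" unfolding g4_def by (rule F_r[OF x])
  have j: "F n 1 (Suc k) 1 (2 + min (x - 1) (n - 2)) = 2 + min (x - 1) k"
    using assms by (subst F_r) auto
  have h: "g1 n (2 + min (x - 1) k) = 1 + min (x - 1) k"
    unfolding g1_def using assms by (subst F_r) auto
  have "tmult (tmult (g4 n) (F n 1 (Suc k) 1)) (g1 n) x = g1 n (F n 1 (Suc k) 1 (g4 n x))"
    by (simp add: tmult_def)
  also have "\<dots> = 1 + min (x - 1) k" by (simp only: i j h)
  also have "\<dots> = F n 1 k 1 x" using F_r[OF x] by simp
  finally show "F n 1 k 1 x = tmult (tmult (g4 n) (F n 1 (Suc k) 1)) (g1 n) x" by simp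
qed (auto simp: F_out tmult_def g1_def g4_def)

lemma Lstep: assumes "n \<ge> 4" "2 \<le> p" "p + 1 \<le> n"
  shows "F n (Suc p) (n - Suc p) (Suc p) = tmult (tmult (g1 n) (F n p (n - p) p)) (g4 n)"
proof (rule ext_in[where n=n])
  fix x assume x: "1 \<le> x" "x \<le> n"
  have i: "g1 n x = 1 + min (x - 2) (n - 2)" unfolding g1_def by (rule F_r[OF x])
  have j: "F n p (n - p) p (1 + min (x - 2) (n - 2)) = p + min (x - Suc p) (n - p - 1)"
    using assms x by (subst F_r) auto
  have h: "g4 n (p + min (x - Suc p) (n - p - 1)) = Suc p + min (x - Suc p) (n - Suc p)"
    unfolding g4_def using assms by (subst F_r) auto
  have "tmult (tmult (g1 n) (F n p (n - p) p)) (g4 n) x = g4 n (F n p (n - p) p (g1 n x))"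
    by (simp add: tmult_def)
  also have "\<dots> = Suc p + min (x - Suc p) (n - Suc p)" by (simp only: i j h)
  also have "\<dots> = F n (Suc p) (n - Suc p) (Suc p) x" using F_r[OF x] by simp
  finally show "F n (Suc p) (n - Suc p) (Suc p) x = tmult (tmult (g1 n) (F n p (n - p) p)) (g4 n) x" by simp
qed (auto simp: F_out tmult_def g1_def g4_def)

lemma clamp: assumes "1 < p" "p + k < n"
  shows "F n p k p = tmult (F n 1 (p + k - 1) 1) (F n p (n - p) p)"
proof (rule ext_in[where n=n])
  fix x assume x: "1 \<le> x" "x \<le> n"
  have i: "F n 1 (p + k - 1) 1 x = 1 + min (x - 1) (p + k - 1)" by (rule F_r[OF x])
  have "F n p (n - p) p (1 + min (x - 1) (p + k - 1)) = p + min (x - p) k"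
    using assms x by (subst F_r) auto
  then show "F n p k p x = tmult (F n 1 (p + k - 1) 1) (F n p (n - p) p) x"
    by (simp add: tmult_def i F_r[OF x])
qed (auto simp: F_out tmult_def)


lemma sgen_sub: assumes "A \<subseteq> S" "\<And>a b. a \<in> S \<Longrightarrow> b \<in> S \<Longrightarrow> tmult a b \<in> S" shows "sgen A \<subseteq> S"
proof
  fix x assume "x \<in> sgen A"
  then show "x \<in> S" by induction (use assms in auto)
qed

lemma inFset: "valid n p k c \<Longrightarrow> k + 2 \<le> n \<Longrightarrow> F n p k c \<in> Fset n"
  unfolding Fset_def by blast

lemma g_Fset: assumes "n \<ge> 4" shows "g1 n \<in> Fset n" "g4 n \<in> Fset n"
  using assms unfolding g1_def g4_def by (auto intro!: inFset simp: valid_def)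

lemma gen_sub: assumes "n \<ge> 4" shows "sgen {g1 n, g4 n} \<subseteq> Fset n"
proof (rule sgen_sub)
  show "{g1 n, g4 n} \<subseteq> Fset n" using g_Fset[OF assms] by auto
  fix a b assume "a \<in> Fset n" "b \<in> Fset n"
  then obtain p k c p' k' c' where v: "valid n p k c" "k + 2 \<le> n" "a = F n p k c"
    "valid n p' k' c'" "b = F n p' k' c'" unfolding Fset_def by auto
  obtain P K C where "valid n P K C" "K \<le> k" "tmult a b = F n P K C"
    using comp_F[OF v(1) v(4)] v by auto
  then show "tmult a b \<in> Fset n" using v(2) unfolding Fset_def by force
qed

lemma gen_sup: assumes "n \<ge> 4" shows "Fset n \<subseteq> sgen {g1 n, g4 n}"
proof
  let ?G = "sgen {g1 n, g4 n}"
  have G1: "g1 n \<in> ?G" and G4: "g4 n \<in> ?G" by (auto intro: sgen.base)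
  have U: "F n 1 (n - 2 - j) 1 \<in> ?G" if "j \<le> n - 2" for j
    using that
  proof (induction j)
    case 0
    have "F n 1 (n - 2 - 0) 1 = tmult (g4 n) (g1 n)" using e3[OF assms] by simp
    then show ?case using sgen.mult[OF G4 G1] by simp
  next
    case (Suc j)
    have "F n 1 (n - 2 - Suc j) 1 = tmult (tmult (g4 n) (F n 1 (Suc (n - 2 - Suc j)) 1)) (g1 n)"
      by (rule Ustep[OF assms]) (use Suc in auto)
    moreover have "Suc (n - 2 - Suc j) = n - 2 - j" using Suc by auto
    moreover have "F n 1 (n - 2 - j) 1 \<in> ?G" using Suc by simp
    ultimately show ?case using sgen.mult[OF sgen.mult[OF G4], OF _ G1] by metis
  qed
  have U': "F n 1 k 1 \<in> ?G" if "k \<le> n - 2" for k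
  proof -
    have "F n 1 (n - 2 - (n - 2 - k)) 1 \<in> ?G" using U[of "n - 2 - k"] by simp
    moreover have "n - 2 - (n - 2 - k) = k" using that by simp
    ultimately show ?thesis by simp
  qed
  have L: "F n p (n - p) p \<in> ?G" if "2 \<le> p" "p \<le> n" for p
    using that
  proof (induction p)
    case 0 then show ?case by simp
  next
    case (Suc p)
    show ?case
    proof (cases "p = 1")
      case True
      then have "F n (Suc p) (n - Suc p) (Suc p) = tmult (g1 n) (g4 n)" using e2[OF assms] by (simp add: numeral_2_eq_2)
      then show ?thesis using sgen.mult[OF G1 G4] by simp
    next
      case False
      then have "2 \<le> p" using Suc by auto
      then have "F n (Suc p) (n - Suc p) (Suc p) = tmult (tmult (g1 n) (F n p (n - p) p)) (g4 n)"
        using Lstep[OF assms] Suc by auto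
      moreover have "F n p (n - p) p \<in> ?G" using Suc \<open>2 \<le> p\<close> by simp
      ultimately show ?thesis using sgen.mult[OF sgen.mult[OF G1], OF _ G4] by metis
    qed
  qed
  have Cl: "F n p k p \<in> ?G" if "valid n p k p" "k + 2 \<le> n" for p k
  proof (cases "p = 1")
    case True then show ?thesis using U'[of k] that by auto
  next
    case False
    show ?thesis
    proof (cases "p + k = n")
      case True
      then have "k = n - p" by auto
      then show ?thesis using L[of p] that False by (auto simp: valid_def)
    next
      case F2: False
      have "F n p k p = tmult (F n 1 (p + k - 1) 1) (F n p (n - p) p)"
        by (rule clamp) (use that False F2 in \<open>auto simp: valid_def\<close>)
      moreover have "F n 1 (p + k - 1) 1 \<in> ?G" using U' that False F2 by (auto simp: valid_def)
      moreover have "F n p (n - p) p \<in> ?G" using L that False by (auto simp: valid_def)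
      ultimately show ?thesis using sgen.mult by metis
    qed
  qed
  have upc: "F n p k (p + j) \<in> ?G" if "valid n p k (p + j)" "k + 2 \<le> n" for p k j
    using that
  proof (induction j)
    case 0 then show ?case using Cl by simp
  next
    case (Suc j)
    have v: "valid n p k (p + j)" using Suc.prems by (auto simp: valid_def)
    have "F n p k (Suc (p + j)) = tmult (F n p k (p + j)) (g4 n)"
      by (rule up[OF v]) (use Suc.prems in \<open>auto simp: valid_def\<close>)
    then show ?case using sgen.mult[OF Suc.IH[OF v Suc.prems(2)] G4] by simp
  qed
  have dnc: "F n p k (p - j) \<in> ?G" if "valid n p k (p - j)" "k + 2 \<le> n" "j < p" for p k j
    using that
  proof (induction j)
    case 0 then show ?case using Cl by simp
  next
    case (Suc j)
    have v: "valid n p k (Suc (p - Suc j))" using Suc.prems by (auto simp: valid_def)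
    have e: "Suc (p - Suc j) = p - j" using Suc.prems by auto
    have "F n p k (p - Suc j) = tmult (F n p k (Suc (p - Suc j))) (g1 n)"
      by (rule down[OF v]) (use Suc.prems in auto)
    moreover have "F n p k (p - j) \<in> ?G" using Suc.IH v e Suc.prems by auto
    moreover have "F n p k (Suc (p - Suc j)) \<in> ?G" using calculation(2) e by simp
    ultimately show ?case using sgen.mult[OF _ G1] by metis
  qed
  fix f assume "f \<in> Fset n"
  then obtain p k c where v: "valid n p k c" "k + 2 \<le> n" "f = F n p k c" unfolding Fset_def by auto
  show "f \<in> ?G"
  proof (cases "p \<le> c")
    case True
    then show ?thesis using upc[of p k "c - p"] v by auto
  next
    case False
    then show ?thesis using dnc[of p k "p - c"] v by (auto simp: valid_def)
  qed
qed

theorem corollary12: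
  fixes n :: nat
  assumes "n \<ge> 4"
  shows "srank (Lnn1 n) = 2"
proof -
  have L: "Lnn1 n = Fset n" using Lnn1_eq assms by auto
  have gen: "sgen {g1 n, g4 n} = Lnn1 n" using gen_sub[OF assms] gen_sup[OF assms] L by auto
  have ne: "g1 n \<noteq> g4 n"
  proof
    assume "g1 n = g4 n"
    then have "g1 n 1 = g4 n 1" by simp
    then show False using assms by (simp add: g1_def g4_def F_def)
  qed
  have P2: "\<exists>A. A \<subseteq> Lnn1 n \<and> finite A \<and> card A = 2 \<and> sgen A = Lnn1 n"
    by (rule exI[of _ "{g1 n, g4 n}"]) (use gen ne g_Fset[OF assms] L in auto)
  have e2F: "F n 2 (n - 2) 2 \<in> Lnn1 n" and e3F: "F n 1 (n - 2) 1 \<in> Lnn1 n"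
    using assms L by (auto intro!: inFset simp: valid_def)
  have g1L: "g1 n \<in> Lnn1 n" using g_Fset[OF assms] L by auto
  have ge: "2 \<le> m" if "\<exists>A. A \<subseteq> Lnn1 n \<and> finite A \<and> card A = m \<and> sgen A = Lnn1 n" for m
  proof (rule ccontr)
    assume "\<not> 2 \<le> m"
    then have m: "m = 0 \<or> m = 1" by auto
    from that obtain A where AA: "A \<subseteq> Lnn1 n \<and> finite A \<and> card A = m \<and> sgen A = Lnn1 n" by (rule exE)
    have A: "A \<subseteq> Lnn1 n" "finite A" "card A = m" "sgen A = Lnn1 n" using AA by (simp_all only:)
    show False
    proof (cases "m = 0")
      case True
      then have "A = {}" using A by auto
      then have s0: "sgen A \<subseteq> {}" by (intro sgen_sub) auto
      have "g1 n \<in> sgen A" using A(4) g1L by simp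
      then show False using s0 by blast
    next
      case False
      then have "m = 1" using m by blast
      then have "card A = 1" using A(3) by (simp only:)
      then obtain g where g: "A = {g}" by (rule card_1_singletonE)
      then have "g \<in> A" by simp
      then have "g \<in> Lnn1 n" using A(1) by (rule subsetD[rotated])
      then have "g \<in> Fset n" using L by simp
      then obtain p k c where v: "valid n p k c" "k + 2 \<le> n" "g = F n p k c" unfolding Fset_def by auto
      have g1v: "g 1 = c" using v assms by (simp add: F_def valid_def)
      have gnv: "g n = c + k" using v assms by (auto simp: F_def valid_def)
      show False
      proof (cases "c = 1")
        case True
        have s1: "sgen A \<subseteq> {f. f 1 = 1}" by (rule sgen_sub) (use g g1v True in \<open>auto simp: tmult_def\<close>)
        have "F n 2 (n - 2) 2 \<in> sgen A" using e2F A(4) by simp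
        then have "F n 2 (n - 2) 2 1 = 1" using s1 by blast
        moreover have "F n 2 (n - 2) 2 1 = 2" using assms by (simp add: F_def)
        ultimately show False by simp
      next
        case c1: False
        show False
        proof (cases "c + k = n")
          case True
          have s2: "sgen A \<subseteq> {f. f n = n}" by (rule sgen_sub) (use g gnv True in \<open>auto simp: tmult_def\<close>)
          have "F n 1 (n - 2) 1 \<in> sgen A" using e3F A(4) by simp
          then have "F n 1 (n - 2) 1 n = n" using s2 by blast
          moreover have "F n 1 (n - 2) 1 n = n - 1" using assms by (simp add: F_def)
          ultimately show False using assms by simp
        next
          case False
          define S where "S = {f. \<forall>x. 1 \<le> x \<and> x \<le> n \<longrightarrow> 2 \<le> f x \<and> f x \<le> n - 1}"
          have gS: "g \<in> S" unfolding S_def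
          proof (intro CollectI allI impI)
            fix x assume x: "1 \<le> x \<and> x \<le> n"
            then have "c \<le> g x \<and> g x \<le> c + k" using F_in[OF v(1)] v(3) by auto
            then show "2 \<le> g x \<and> g x \<le> n - 1" using c1 False v(1) by (auto simp: valid_def)
          qed
          have cl: "tmult a b \<in> S" if "a \<in> S" "b \<in> S" for a b
            unfolding S_def
          proof (intro CollectI allI impI)
            fix x assume x: "1 \<le> x \<and> x \<le> n"
            have "2 \<le> a x \<and> a x \<le> n - 1" using that(1) x unfolding S_def by blast
            then have "1 \<le> a x \<and> a x \<le> n" by auto
            then have "2 \<le> b (a x) \<and> b (a x) \<le> n - 1" using that(2) unfolding S_def by blast
            then show "2 \<le> tmult a b x \<and> tmult a b x \<le> n - 1" by (simp add: tmult_def)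
          qed
          have "sgen A \<subseteq> S" by (rule sgen_sub) (use g gS cl in auto)
          moreover have "g1 n \<in> sgen A" using g1L A(4) by simp
          ultimately have "g1 n \<in> S" by blast
          then have "2 \<le> g1 n 1" using assms unfolding S_def by auto
          moreover have "g1 n 1 = 1" using assms by (simp add: g1_def F_def)
          ultimately show False by simp
        qed
      qed
    qed
  qed
  show ?thesis unfolding srank_def
    by (rule Least_equality) (use P2 ge in auto)
qed
end
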